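(* Let $M$ be a partial multiplication matrix and let $\pi^\#\in\mathsf{Grid}^\#(M)$. Then $\pi^\#$ is $M$-indivisible if and only if its orientation digraph $D_{\pi^\#}$ is strongly connected.
   Context: A gridding matrix has entries in $\{0,1,-1\}$; an $m\times n$ one has $m$ columns, $n$ rows, $M_{ij}$ in column $i$ from the left and row $j$ from the bottom. An $M$-gridding of a permutation $\pi$ of length $L$ is a choice of vertical lines $\tfrac12=v_0\le\dots\le v_m=L+\tfrac12$ and horizontal lines $\tfrac12=h_0\le\dots\le h_n=L+\tfrac12$, not through points of $\pi$, such that in each cell $C_{ij}=\{v_{i-1}<x<v_i,\ h_{j-1}<y<h_j\}$ the points of $\pi$ are absent if $M_{ij}=0$, increasing if $M_{ij}=1$, decreasing if $M_{ij}=-1$. $\mathsf{Grid}^\#(M)$ is the set of $M$-gridded permutations. $M$ is a partial multiplication matrix: there are fixed $c_1,\dots,c_m,r_1,\dots,r_n\in\{\pm1\}$ with $M_{ij}=c_ir_j$ for each non-zero entry. Column $i$ is oriented left-to-right if $c_i=1$, right-to-left otherwise; row $j$ bottom-to-top if $r_j=1$, top-to-bottom otherwise. The orientation digraph $D_{\pi^\#}$ has the points of $\pi^\#$ as vertices, with $x\to y$ whenever $x,y$ lie in a common column of cells and $x$ precedes $y$ in that column's orientation, or in a common row of cells and $x$ precedes $y$ in that row's orientation. $M$-sum: for $M$-gridded $\sigma^\#,\tau^\#$, $\sigma^\#\boxplus\tau^\#$ is the $M$-gridded permutation whose points are those of $\sigma^\#$ and $\tau^\#$, each in the cell it occupied,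 with the relative order (in position and value) among points of $\sigma^\#$ and among points of $\tau^\#$ unchanged, and such that in every column of cells all points of $\sigma^\#$ precede all points of $\tau^\#$ in the column's orientation and in every row of cells all points of $\sigma^\#$ precede all points of $\tau^\#$ in the row's orientation. (Equivalently: place $\sigma^\#$ in the first copy and $\tau^\#$ in the second copy of $M$ inside the doubled matrix $M^{\times2}$ and delete odd-numbered grid lines.) $\pi^\#$ is $M$-divisible if $\pi^\#=\sigma^\#\boxplus\tau^\#$ with $\sigma^\#,\tau^\#$ non-empty, and $M$-indivisible otherwise. *)

theory Defs
  imports Main
begin

text \<open>
Conventions. A gridding matrix with m columns and n rows is a function
M :: nat => nat => int, used on 1 <= i <= m (column, from the left) and
1 <= j <= n (row, from the bottom).

An M-gridded permutation of length L is a record with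
 - len = L,
 - perm: the permutation, a bijection of {1..L} (position x has value perm x),
 - vl: vertical lines, vl i = k encodes the line at k + 1/2 (i = 0..m),
 - hl: horizontal lines, hl j = k encodes the line at k + 1/2 (j = 0..n).
\<close>

record gperm =
  len  :: nat
  perm :: "nat \<Rightarrow> nat"
  vl   :: "nat \<Rightarrow> nat"
  hl   :: "nat \<Rightarrow> nat"

definition pts :: "gperm \<Rightarrow> nat set" where
  "pts G = {1..len G}"

definition in_col :: "gperm \<Rightarrow> nat \<Rightarrow> nat \<Rightarrow> bool" where
  "in_col G i x \<longleftrightarrow> vl G (i - 1) < x \<and> x \<le> vl G i"

definition in_row :: "gperm \<Rightarrow> nat \<Rightarrow> nat \<Rightarrow> bool" where
  "in_row G j x \<longleftrightarrow> hl G (j - 1) < perm G x \<and> perm G x \<le> hl G j"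

definition gridding_matrix :: "(nat \<Rightarrow> nat \<Rightarrow> int) \<Rightarrow> nat \<Rightarrow> nat \<Rightarrow> bool" where
  "gridding_matrix M m n \<longleftrightarrow> (\<forall>i\<in>{1..m}. \<forall>j\<in>{1..n}. M i j \<in> {0, 1, -1})"

definition partial_mult_matrix ::
  "(nat \<Rightarrow> nat \<Rightarrow> int) \<Rightarrow> nat \<Rightarrow> nat \<Rightarrow> (nat \<Rightarrow> int) \<Rightarrow> (nat \<Rightarrow> int) \<Rightarrow> bool" where
  "partial_mult_matrix M m n c r \<longleftrightarrow>
     gridding_matrix M m n \<and>
     (\<forall>i\<in>{1..m}. c i \<in> {1, -1}) \<and> (\<forall>j\<in>{1..n}. r j \<in> {1, -1}) \<and>
     (\<forall>i\<in>{1..m}. \<forall>j\<in>{1..n}. M i j \<noteq> 0 \<longrightarrow> M i j = c i * r j)"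

definition gridded :: "(nat \<Rightarrow> nat \<Rightarrow> int) \<Rightarrow> nat \<Rightarrow> nat \<Rightarrow> gperm \<Rightarrow> bool" where
  "gridded M m n G \<longleftrightarrow>
     bij_betw (perm G) {1..len G} {1..len G} \<and>
     vl G 0 = 0 \<and> vl G m = len G \<and> (\<forall>i\<in>{1..m}. vl G (i - 1) \<le> vl G i) \<and>
     hl G 0 = 0 \<and> hl G n = len G \<and> (\<forall>j\<in>{1..n}. hl G (j - 1) \<le> hl G j) \<and>
     (\<forall>i\<in>{1..m}. \<forall>j\<in>{1..n}. \<forall>x\<in>pts G. \<forall>y\<in>pts G.
        in_col G i x \<and> in_row G j x \<and> in_col G i y \<and> in_row G j y \<longrightarrow>
          M i j \<noteq> 0 \<and>
          (M i j = 1 \<longrightarrow> x < y \<longrightarrow> perm G x < perm G y) \<and>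
          (M i j = -1 \<longrightarrow> x < y \<longrightarrow> perm G y < perm G x))"

definition col_prec :: "(nat \<Rightarrow> int) \<Rightarrow> nat \<Rightarrow> nat \<Rightarrow> nat \<Rightarrow> bool" where
  "col_prec c i x y \<longleftrightarrow> (if c i = 1 then x < y else y < x)"

definition row_prec :: "(nat \<Rightarrow> int) \<Rightarrow> nat \<Rightarrow> nat \<Rightarrow> nat \<Rightarrow> bool" where
  "row_prec r j a b \<longleftrightarrow> (if r j = 1 then a < b else b < a)"

definition orient_edges ::
  "nat \<Rightarrow> nat \<Rightarrow> (nat \<Rightarrow> int) \<Rightarrow> (nat \<Rightarrow> int) \<Rightarrow> gperm \<Rightarrow> (nat \<times> nat) set" where
  "orient_edges m n c r G = {(x, y). x \<in> pts G \<and> y \<in> pts G \<and>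
     ((\<exists>i\<in>{1..m}. in_col G i x \<and> in_col G i y \<and> col_prec c i x y) \<or>
      (\<exists>j\<in>{1..n}. in_row G j x \<and> in_row G j y \<and> row_prec r j (perm G x) (perm G y)))}"

definition strongly_connected :: "nat set \<Rightarrow> (nat \<times> nat) set \<Rightarrow> bool" where
  "strongly_connected V E \<longleftrightarrow> (\<forall>x\<in>V. \<forall>y\<in>V. (x, y) \<in> E\<^sup>*)"

definition is_msum ::
  "nat \<Rightarrow> nat \<Rightarrow> (nat \<Rightarrow> int) \<Rightarrow> (nat \<Rightarrow> int) \<Rightarrow> gperm \<Rightarrow> gperm \<Rightarrow> gperm \<Rightarrow> bool" where
  "is_msum m n c r S T P \<longleftrightarrow>
    (\<exists>f g.
       f ` pts S \<subseteq> pts P \<and> g ` pts T \<subseteq> pts P \<and>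
       inj_on f (pts S) \<and> inj_on g (pts T) \<and>
       f ` pts S \<inter> g ` pts T = {} \<and> f ` pts S \<union> g ` pts T = pts P \<and>
       (\<forall>x\<in>pts S. (\<forall>i\<in>{1..m}. in_col P i (f x) \<longleftrightarrow> in_col S i x) \<and>
                  (\<forall>j\<in>{1..n}. in_row P j (f x) \<longleftrightarrow> in_row S j x)) \<and>
       (\<forall>y\<in>pts T. (\<forall>i\<in>{1..m}. in_col P i (g y) \<longleftrightarrow> in_col T i y) \<and>
                  (\<forall>j\<in>{1..n}. in_row P j (g y) \<longleftrightarrow> in_row T j y)) \<and>
       (\<forall>x\<in>pts S. \<forall>x'\<in>pts S. (x < x' \<longleftrightarrow> f x < f x') \<and>
                   (perm S x < perm S x' \<longleftrightarrow> perm P (f x) < perm P (f x'))) \<and>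
       (\<forall>y\<in>pts T. \<forall>y'\<in>pts T. (y < y' \<longleftrightarrow> g y < g y') \<and>
                   (perm T y < perm T y' \<longleftrightarrow> perm P (g y) < perm P (g y'))) \<and>
       (\<forall>x\<in>pts S. \<forall>y\<in>pts T.
          (\<forall>i\<in>{1..m}. in_col P i (f x) \<and> in_col P i (g y) \<longrightarrow> col_prec c i (f x) (g y)) \<and>
          (\<forall>j\<in>{1..n}. in_row P j (f x) \<and> in_row P j (g y) \<longrightarrow>
               row_prec r j (perm P (f x)) (perm P (g y)))))"

definition M_divisible ::
  "(nat \<Rightarrow> nat \<Rightarrow> int) \<Rightarrow> nat \<Rightarrow> nat \<Rightarrow> (nat \<Rightarrow> int) \<Rightarrow> (nat \<Rightarrow> int) \<Rightarrow> gperm \<Rightarrow> bool" where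
  "M_divisible M m n c r P \<longleftrightarrow>
     (\<exists>S T. gridded M m n S \<and> gridded M m n T \<and> len S > 0 \<and> len T > 0 \<and>
            is_msum m n c r S T P)"

definition M_indivisible ::
  "(nat \<Rightarrow> nat \<Rightarrow> int) \<Rightarrow> nat \<Rightarrow> nat \<Rightarrow> (nat \<Rightarrow> int) \<Rightarrow> (nat \<Rightarrow> int) \<Rightarrow> gperm \<Rightarrow> bool" where
  "M_indivisible M m n c r P \<longleftrightarrow> \<not> M_divisible M m n c r P"

end

theory Submission
  imports Defs
begin

definition rk :: "nat set \<Rightarrow> nat \<Rightarrow> nat" where
  "rk A x = card {a\<in>A. a \<le> x}"

lemma rk_mono: "finite A \<Longrightarrow> v \<le> w \<Longrightarrow> rk A v \<le> rk A w"
  unfolding rk_def by (intro card_mono) auto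

lemma rk_le_iff:
  assumes "finite A" "x \<in> A"
  shows "rk A x \<le> rk A v \<longleftrightarrow> x \<le> v"
proof
  assume "x \<le> v" then show "rk A x \<le> rk A v" using rk_mono assms by blast
next
  assume h: "rk A x \<le> rk A v"
  show "x \<le> v"
  proof (rule ccontr)
    assume "\<not> x \<le> v"
    then have "{a\<in>A. a \<le> v} \<subset> {a\<in>A. a \<le> x}" using assms by auto
    then have "card {a\<in>A. a \<le> v} < card {a\<in>A. a \<le> x}"
      using assms by (intro psubset_card_mono) auto
    then show False using h unfolding rk_def by simp
  qed
qed

lemma rk_less_iff:
  assumes "finite A" "x \<in> A" "y \<in> A"
  shows "rk A x < rk A y \<longleftrightarrow> x < y"
  using rk_le_iff[OF assms(1) assms(3), of x] by auto

lemma rk_bij: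
  assumes "finite A"
  shows "bij_betw (rk A) A {1..card A}"
proof -
  have inj: "inj_on (rk A) A"
  proof (rule inj_onI)
    fix x y assume x: "x \<in> A" and y: "y \<in> A" and e: "rk A x = rk A y"
    show "x = y"
    proof (rule ccontr)
      assume "x \<noteq> y"
      then have "x < y \<or> y < x" by arith
      then show False using rk_less_iff[OF assms x y] rk_less_iff[OF assms y x] e by auto
    qed
  qed
  have sub: "rk A ` A \<subseteq> {1..card A}"
  proof
    fix k assume "k \<in> rk A ` A"
    then obtain x where x: "x \<in> A" "k = rk A x" by auto
    have "x \<in> {a\<in>A. a \<le> x}" using x by auto
    then have "1 \<le> card {a\<in>A. a \<le> x}"
    proof -
      have "finite {a\<in>A. a \<le> x}" using assms by simp
      then have "card {a\<in>A. a \<le> x} > 0" using \<open>x \<in> {a\<in>A. a \<le> x}\<close> card_gt_0_iff by blast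
      then show ?thesis by simp
    qed
    moreover have "card {a\<in>A. a \<le> x} \<le> card A" using assms by (intro card_mono) auto
    ultimately show "k \<in> {1..card A}" using x unfolding rk_def by auto
  qed
  have "card (rk A ` A) = card {1..card A}" using card_image[OF inj] by simp
  then have "rk A ` A = {1..card A}" using sub by (intro card_subset_eq) auto
  then show ?thesis using inj unfolding bij_betw_def by simp
qed


definition restr :: "gperm \<Rightarrow> nat set \<Rightarrow> gperm" where
  "restr P A = (| len = card A,
     perm = (\<lambda>k. rk (perm P ` A) (perm P (inv_into A (rk A) k))),
     vl = (\<lambda>i. rk A (vl P i)),
     hl = (\<lambda>j. rk (perm P ` A) (hl P j)) |)"

lemma restr_props:
  assumes gr: "gridded M m n P" and AP: "A \<subseteq> pts P"
  defines "f \<equiv> inv_into A (rk A)"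
  shows "gridded M m n (restr P A)" "len (restr P A) = card A"
    "bij_betw f (pts (restr P A)) A"
    "\<forall>x\<in>pts (restr P A). \<forall>i. in_col (restr P A) i x \<longleftrightarrow> in_col P i (f x)"
    "\<forall>x\<in>pts (restr P A). \<forall>j. in_row (restr P A) j x \<longleftrightarrow> in_row P j (f x)"
    "\<forall>x\<in>pts (restr P A). \<forall>x'\<in>pts (restr P A). (x < x' \<longleftrightarrow> f x < f x') \<and>
        (perm (restr P A) x < perm (restr P A) x' \<longleftrightarrow> perm P (f x) < perm P (f x'))"
proof -
  let ?G = "restr P A"
  define B where "B = perm P ` A"
  have "bij_betw (perm P) {1..len P} {1..len P}" using gr unfolding gridded_def by (elim conjE)
  then have bijP: "bij_betw (perm P) (pts P) (pts P)" unfolding pts_def .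
  have finA: "finite A" using AP by (rule finite_subset) (simp add: pts_def)
  have injA: "inj_on (perm P) A" using inj_on_subset[OF bij_betw_imp_inj_on[OF bijP] AP] .
  have BP: "B \<subseteq> pts P" using bijP AP unfolding B_def bij_betw_def by blast
  have finB: "finite B" unfolding B_def using finA by simp
  have cardB: "card B = card A" unfolding B_def using card_image[OF injA] .
  have rkA: "bij_betw (rk A) A {1..card A}" using rk_bij[OF finA] .
  have rkB: "bij_betw (rk B) B {1..card A}" using rk_bij[OF finB] cardB by simp
  have ptsG: "pts ?G = {1..card A}" unfolding pts_def restr_def by simp
  show lenG: "len ?G = card A" unfolding restr_def by simp
  have fb: "bij_betw f {1..card A} A" unfolding f_def using bij_betw_inv_into[OF rkA] .
  then show "bij_betw f (pts ?G) A" using ptsG by simp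
  have fA: "f k \<in> A" if "k \<in> {1..card A}" for k using fb that bij_betwE by blast
  have rkf: "rk A (f k) = k" if "k \<in> {1..card A}" for k
    unfolding f_def using that rkA by (simp add: bij_betw_def f_inv_into_f)
  have permG: "perm ?G k = rk B (perm P (f k))" for k
    unfolding restr_def B_def f_def by simp
  have pB: "perm P (f k) \<in> B" if "k \<in> {1..card A}" for k using fA[OF that] unfolding B_def by simp
  show col: "\<forall>x\<in>pts ?G. \<forall>i. in_col ?G i x \<longleftrightarrow> in_col P i (f x)"
  proof (intro ballI allI)
    fix x i assume x: "x \<in> pts ?G"
    then have x': "x \<in> {1..card A}" using ptsG by simp
    have "in_col ?G i x \<longleftrightarrow> rk A (vl P (i-1)) < rk A (f x) \<and> rk A (f x) \<le> rk A (vl P i)"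
      unfolding in_col_def restr_def using rkf[OF x'] by simp
    also have "\<dots> \<longleftrightarrow> in_col P i (f x)"
      unfolding in_col_def using rk_le_iff[OF finA fA[OF x']] by (simp add: not_le[symmetric])
    finally show "in_col ?G i x \<longleftrightarrow> in_col P i (f x)" .
  qed
  show row: "\<forall>x\<in>pts ?G. \<forall>j. in_row ?G j x \<longleftrightarrow> in_row P j (f x)"
  proof (intro ballI allI)
    fix x j assume x: "x \<in> pts ?G"
    then have x': "x \<in> {1..card A}" using ptsG by simp
    have "in_row ?G j x \<longleftrightarrow> rk B (hl P (j-1)) < rk B (perm P (f x)) \<and> rk B (perm P (f x)) \<le> rk B (hl P j)"
      unfolding in_row_def using permG by (simp add: restr_def B_def)
    also have "\<dots> \<longleftrightarrow> in_row P j (f x)"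
      unfolding in_row_def using rk_le_iff[OF finB pB[OF x']] by (simp add: not_le[symmetric])
    finally show "in_row ?G j x \<longleftrightarrow> in_row P j (f x)" .
  qed
  show ord: "\<forall>x\<in>pts ?G. \<forall>x'\<in>pts ?G. (x < x' \<longleftrightarrow> f x < f x') \<and>
        (perm ?G x < perm ?G x' \<longleftrightarrow> perm P (f x) < perm P (f x'))"
  proof (intro ballI conjI)
    fix x x' assume x: "x \<in> pts ?G" and y: "x' \<in> pts ?G"
    then have x': "x \<in> {1..card A}" and y': "x' \<in> {1..card A}" using ptsG by auto
    show "x < x' \<longleftrightarrow> f x < f x'"
      using rk_less_iff[OF finA fA[OF x'] fA[OF y']] rkf[OF x'] rkf[OF y'] by simp
    show "perm ?G x < perm ?G x' \<longleftrightarrow> perm P (f x) < perm P (f x')"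
      using rk_less_iff[OF finB pB[OF x'] pB[OF y']] permG by simp
  qed
  have pbij: "bij_betw (perm ?G) {1..card A} {1..card A}"
  proof -
    have pAB: "bij_betw (perm P) A B" unfolding B_def using injA by (simp add: bij_betw_def)
    have "bij_betw (rk B \<circ> perm P \<circ> f) {1..card A} {1..card A}"
      using bij_betw_trans[OF bij_betw_trans[OF fb pAB] rkB] by (simp add: comp_assoc)
    then show ?thesis by (rule bij_betw_cong[THEN iffD1, rotated]) (simp add: permG)
  qed
  have A1: "a \<in> A \<Longrightarrow> 1 \<le> a \<and> a \<le> len P" for a using AP unfolding pts_def by auto
  have B1: "b \<in> B \<Longrightarrow> 1 \<le> b \<and> b \<le> len P" for b using BP unfolding pts_def by auto
  have "{a\<in>A. a \<le> 0} = {}" using A1 by fastforce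
  then have rk0A: "rk A 0 = 0" unfolding rk_def by simp
  have "{b\<in>B. b \<le> 0} = {}" using B1 by fastforce
  then have rk0B: "rk B 0 = 0" unfolding rk_def by simp
  have "{a\<in>A. a \<le> len P} = A" using A1 by blast
  then have rkLA: "rk A (len P) = card A" unfolding rk_def by simp
  have "{b\<in>B. b \<le> len P} = B" using B1 by blast
  then have rkLB: "rk B (len P) = card A" unfolding rk_def using cardB by simp
  have grP: "bij_betw (perm P) {1..len P} {1..len P} \<and>
     vl P 0 = 0 \<and> vl P m = len P \<and> (\<forall>i\<in>{1..m}. vl P (i - 1) \<le> vl P i) \<and>
     hl P 0 = 0 \<and> hl P n = len P \<and> (\<forall>j\<in>{1..n}. hl P (j - 1) \<le> hl P j) \<and>
     (\<forall>i\<in>{1..m}. \<forall>j\<in>{1..n}. \<forall>x\<in>pts P. \<forall>y\<in>pts P.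
        in_col P i x \<and> in_row P j x \<and> in_col P i y \<and> in_row P j y \<longrightarrow>
          M i j \<noteq> 0 \<and>
          (M i j = 1 \<longrightarrow> x < y \<longrightarrow> perm P x < perm P y) \<and>
          (M i j = -1 \<longrightarrow> x < y \<longrightarrow> perm P y < perm P x))"
    using gr unfolding gridded_def .
  note cellP = grP[THEN conjunct2, THEN conjunct2, THEN conjunct2, THEN conjunct2,
      THEN conjunct2, THEN conjunct2, THEN conjunct2]
  have vl0: "vl P 0 = 0" using grP by (elim conjE)
  have vlm: "vl P m = len P" using grP by (elim conjE)
  have vlmono: "\<forall>i\<in>{1..m}. vl P (i - 1) \<le> vl P i" using grP by (elim conjE)
  have hl0: "hl P 0 = 0" using grP by (elim conjE)
  have hln: "hl P n = len P" using grP by (elim conjE)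
  have hlmono: "\<forall>j\<in>{1..n}. hl P (j - 1) \<le> hl P j" using grP by (elim conjE)
  have cells: "\<forall>i\<in>{1..m}. \<forall>j\<in>{1..n}. \<forall>x\<in>pts ?G. \<forall>y\<in>pts ?G.
        in_col ?G i x \<and> in_row ?G j x \<and> in_col ?G i y \<and> in_row ?G j y \<longrightarrow>
          M i j \<noteq> 0 \<and>
          (M i j = 1 \<longrightarrow> x < y \<longrightarrow> perm ?G x < perm ?G y) \<and>
          (M i j = -1 \<longrightarrow> x < y \<longrightarrow> perm ?G y < perm ?G x)"
  proof (intro ballI impI)
    fix i j x y assume i: "i \<in> {1..m}" and j: "j \<in> {1..n}" and x: "x \<in> pts ?G" and y: "y \<in> pts ?G"
      and h: "in_col ?G i x \<and> in_row ?G j x \<and> in_col ?G i y \<and> in_row ?G j y"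
    have x': "x \<in> {1..card A}" and y': "y \<in> {1..card A}" using x y ptsG by auto
    have fx: "f x \<in> pts P" using fA[OF x'] AP by blast
    have fy: "f y \<in> pts P" using fA[OF y'] AP by blast
    have h': "in_col P i (f x) \<and> in_row P j (f x) \<and> in_col P i (f y) \<and> in_row P j (f y)"
      using h col[rule_format, OF x, of i] col[rule_format, OF y, of i]
        row[rule_format, OF x, of j] row[rule_format, OF y, of j] by simp
    have cP: "M i j \<noteq> 0 \<and>
          (M i j = 1 \<longrightarrow> f x < f y \<longrightarrow> perm P (f x) < perm P (f y)) \<and>
          (M i j = -1 \<longrightarrow> f x < f y \<longrightarrow> perm P (f y) < perm P (f x))"
      using cellP[rule_format, OF i j fx fy h'] .
    have o: "(x < y \<longleftrightarrow> f x < f y) \<and> (perm ?G x < perm ?G y \<longleftrightarrow> perm P (f x) < perm P (f y))"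
      using ord[rule_format, OF x y] .
    have o2: "perm ?G y < perm ?G x \<longleftrightarrow> perm P (f y) < perm P (f x)"
      using ord[rule_format, OF y x] by (elim conjE)
    show "M i j \<noteq> 0 \<and>
          (M i j = 1 \<longrightarrow> x < y \<longrightarrow> perm ?G x < perm ?G y) \<and>
          (M i j = -1 \<longrightarrow> x < y \<longrightarrow> perm ?G y < perm ?G x)"
      using cP o o2 by simp
  qed
  have vlG: "vl ?G i = rk A (vl P i)" for i unfolding restr_def by simp
  have hlG: "hl ?G j = rk B (hl P j)" for j unfolding restr_def B_def by simp
  show "gridded M m n ?G"
    unfolding gridded_def
  proof (intro conjI)
    show "bij_betw (perm ?G) {1..len ?G} {1..len ?G}" using pbij lenG by simp
    show "vl ?G 0 = 0" using rk0A vl0 vlG by simp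
    show "vl ?G m = len ?G" using rkLA vlm vlG lenG by simp
    show "hl ?G 0 = 0" using rk0B hl0 hlG by simp
    show "hl ?G n = len ?G" using rkLB hln hlG lenG by simp
    show "\<forall>i\<in>{1..m}. vl ?G (i - 1) \<le> vl ?G i"
      using vlmono finA rk_mono vlG by simp
    show "\<forall>j\<in>{1..n}. hl ?G (j - 1) \<le> hl ?G j"
      using hlmono finB rk_mono hlG by simp
  qed (fact cells)
qed


lemma edge_pts: "(u, v) \<in> orient_edges m n c r G \<Longrightarrow> u \<in> pts G \<and> v \<in> pts G"
  unfolding orient_edges_def by simp

lemma edge_col: "u \<in> pts G \<Longrightarrow> v \<in> pts G \<Longrightarrow> i \<in> {1..m} \<Longrightarrow> in_col G i u \<Longrightarrow> in_col G i v
  \<Longrightarrow> col_prec c i u v \<Longrightarrow> (u, v) \<in> orient_edges m n c r G"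
  unfolding orient_edges_def by blast

lemma edge_row: "u \<in> pts G \<Longrightarrow> v \<in> pts G \<Longrightarrow> j \<in> {1..n} \<Longrightarrow> in_row G j u \<Longrightarrow> in_row G j v
  \<Longrightarrow> row_prec r j (perm G u) (perm G v) \<Longrightarrow> (u, v) \<in> orient_edges m n c r G"
  unfolding orient_edges_def by blast

lemma col_prec_asym: "col_prec c i x y \<Longrightarrow> col_prec c i y x \<Longrightarrow> False"
  unfolding col_prec_def by (cases "c i = 1") simp_all

lemma row_prec_asym: "row_prec r j x y \<Longrightarrow> row_prec r j y x \<Longrightarrow> False"
  unfolding row_prec_def by (cases "r j = 1") simp_all

lemma col_prec_total: "\<not> col_prec c i x y \<Longrightarrow> x \<noteq> y \<Longrightarrow> col_prec c i y x"
  unfolding col_prec_def by (cases "c i = 1") simp_all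

lemma row_prec_total: "\<not> row_prec r j x y \<Longrightarrow> x \<noteq> y \<Longrightarrow> row_prec r j y x"
  unfolding row_prec_def by (cases "r j = 1") simp_all

lemma closed_reach:
  assumes E: "\<And>v w. (v, w) \<in> E \<Longrightarrow> v \<notin> F \<Longrightarrow> w \<notin> F"
    and "(u, v) \<in> E\<^sup>*" and "u \<notin> F"
  shows "v \<notin> F"
  using assms(2,3) by (induction rule: rtrancl_induct) (auto dest: E)

lemma msum_parts:
  assumes "is_msum m n c r S T P"
  shows "\<exists>f g. f ` pts S \<subseteq> pts P \<and> g ` pts T \<subseteq> pts P \<and>
      f ` pts S \<inter> g ` pts T = {} \<and> f ` pts S \<union> g ` pts T = pts P \<and>
      (\<forall>x\<in>pts S. \<forall>y\<in>pts T.
          (\<forall>i\<in>{1..m}. in_col P i (f x) \<and> in_col P i (g y) \<longrightarrow> col_prec c i (f x) (g y)) \<and>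
          (\<forall>j\<in>{1..n}. in_row P j (f x) \<and> in_row P j (g y) \<longrightarrow>
               row_prec r j (perm P (f x)) (perm P (g y))))"
  using assms unfolding is_msum_def
  apply (elim exE conjE)
  apply (rule exI, rule exI, intro conjI)
      apply assumption+
  done

theorem lemma3p2:
  fixes M :: "nat \<Rightarrow> nat \<Rightarrow> int" and m n :: nat and c r :: "nat \<Rightarrow> int" and P :: gperm
  assumes "partial_mult_matrix M m n c r"
    and "gridded M m n P"
  shows "M_indivisible M m n c r P \<longleftrightarrow> strongly_connected (pts P) (orient_edges m n c r P)"
proof
  let ?E = "orient_edges m n c r P"
  have "bij_betw (perm P) {1..len P} {1..len P}" using assms(2) unfolding gridded_def by (elim conjE)
  then have bijP: "bij_betw (perm P) (pts P) (pts P)" unfolding pts_def .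
  then have injP: "inj_on (perm P) (pts P)" by (simp add: bij_betw_def)
  assume ind: "M_indivisible M m n c r P"
  show "strongly_connected (pts P) ?E"
  proof (rule ccontr)
    assume "\<not> strongly_connected (pts P) ?E"
    then obtain x y where x: "x \<in> pts P" and y: "y \<in> pts P" and nxy: "(x, y) \<notin> ?E\<^sup>*"
      unfolding strongly_connected_def by blast
    define A where "A = {z \<in> pts P. (z, y) \<in> ?E\<^sup>*}"
    define B where "B = pts P - A"
    have AP: "A \<subseteq> pts P" and BP: "B \<subseteq> pts P" unfolding A_def B_def by auto
    have yA: "y \<in> A" unfolding A_def using y by simp
    have xB: "x \<in> B" unfolding B_def A_def using x nxy by simp
    have closed: "u \<in> A" if "(u, v) \<in> ?E" "v \<in> A" for u v
    proof -
      have "u \<in> pts P" using edge_pts[OF that(1)] by simp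
      moreover have "(v, y) \<in> ?E\<^sup>*" using that(2) unfolding A_def by simp
      then have "(u, y) \<in> ?E\<^sup>*" by (rule converse_rtrancl_into_rtrancl[OF that(1)])
      ultimately show ?thesis unfolding A_def by simp
    qed
    define f where "f = inv_into A (rk A)"
    define g where "g = inv_into B (rk B)"
    note RA = restr_props[OF assms(2) AP, folded f_def]
    note RB = restr_props[OF assms(2) BP, folded g_def]
    let ?S = "restr P A" and ?T = "restr P B"
    have finP: "finite (pts P)" unfolding pts_def by simp
    have "finite A" using AP finP finite_subset by blast
    then have cA: "card A > 0" using yA card_gt_0_iff by blast
    have "finite B" using BP finP finite_subset by blast
    then have cB: "card B > 0" using xB card_gt_0_iff by blast
    have fim: "f ` pts ?S = A" using RA(3) by (simp add: bij_betw_def)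
    have gim: "g ` pts ?T = B" using RB(3) by (simp add: bij_betw_def)
    have prec: "(\<forall>i\<in>{1..m}. in_col P i (f a) \<and> in_col P i (g b) \<longrightarrow> col_prec c i (f a) (g b)) \<and>
          (\<forall>j\<in>{1..n}. in_row P j (f a) \<and> in_row P j (g b) \<longrightarrow>
               row_prec r j (perm P (f a)) (perm P (g b)))"
      if a: "a \<in> pts ?S" and b: "b \<in> pts ?T" for a b
    proof -
      have fa: "f a \<in> A" using fim a by blast
      have gb: "g b \<in> B" using gim b by blast
      have gbA: "g b \<notin> A" using gb unfolding B_def by simp
      have ne: "f a \<noteq> g b"
      proof
        assume "f a = g b" then show False using fa gbA by simp
      qed
      have nep: "perm P (f a) \<noteq> perm P (g b)" using inj_on_contraD[OF injP ne] fa gb AP BP by blast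
      show ?thesis
      proof (intro conjI ballI impI)
        fix i assume i: "i \<in> {1..m}" and h: "in_col P i (f a) \<and> in_col P i (g b)"
        show "col_prec c i (f a) (g b)"
        proof (rule ccontr)
          assume "\<not> col_prec c i (f a) (g b)"
          then have "col_prec c i (g b) (f a)" using ne by (rule col_prec_total)
          then have "(g b, f a) \<in> ?E" using i h fa gb AP BP by (intro edge_col) auto
          then show False using closed fa gbA by blast
        qed
      next
        fix j assume j: "j \<in> {1..n}" and h: "in_row P j (f a) \<and> in_row P j (g b)"
        show "row_prec r j (perm P (f a)) (perm P (g b))"
        proof (rule ccontr)
          assume "\<not> row_prec r j (perm P (f a)) (perm P (g b))"
          then have "row_prec r j (perm P (g b)) (perm P (f a))" using nep by (rule row_prec_total)
          then have "(g b, f a) \<in> ?E" using j h fa gb AP BP by (intro edge_row) auto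
          then show False using closed fa gbA by blast
        qed
      qed
    qed
    have "is_msum m n c r ?S ?T P"
      unfolding is_msum_def
    proof (rule exI[of _ f], rule exI[of _ g], intro conjI)
      show "f ` pts ?S \<subseteq> pts P" using fim AP by simp
      show "g ` pts ?T \<subseteq> pts P" using gim BP by simp
      show "inj_on f (pts ?S)" using RA(3) by (simp add: bij_betw_def)
      show "inj_on g (pts ?T)" using RB(3) by (simp add: bij_betw_def)
      show "f ` pts ?S \<inter> g ` pts ?T = {}" using fim gim unfolding B_def by auto
      show "f ` pts ?S \<union> g ` pts ?T = pts P" using fim gim AP unfolding B_def by auto
      show "\<forall>x\<in>pts ?S. (\<forall>i\<in>{1..m}. in_col P i (f x) \<longleftrightarrow> in_col ?S i x) \<and>
                  (\<forall>j\<in>{1..n}. in_row P j (f x) \<longleftrightarrow> in_row ?S j x)" using RA(4,5) by simp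
      show "\<forall>x\<in>pts ?T. (\<forall>i\<in>{1..m}. in_col P i (g x) \<longleftrightarrow> in_col ?T i x) \<and>
                  (\<forall>j\<in>{1..n}. in_row P j (g x) \<longleftrightarrow> in_row ?T j x)" using RB(4,5) by simp
      show "\<forall>x\<in>pts ?S. \<forall>x'\<in>pts ?S. (x < x' \<longleftrightarrow> f x < f x') \<and>
                   (perm ?S x < perm ?S x' \<longleftrightarrow> perm P (f x) < perm P (f x'))" using RA(6) by simp
      show "\<forall>x\<in>pts ?T. \<forall>x'\<in>pts ?T. (x < x' \<longleftrightarrow> g x < g x') \<and>
                   (perm ?T x < perm ?T x' \<longleftrightarrow> perm P (g x) < perm P (g x'))" using RB(6) by simp
      show "\<forall>x\<in>pts ?S. \<forall>y\<in>pts ?T.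
          (\<forall>i\<in>{1..m}. in_col P i (f x) \<and> in_col P i (g y) \<longrightarrow> col_prec c i (f x) (g y)) \<and>
          (\<forall>j\<in>{1..n}. in_row P j (f x) \<and> in_row P j (g y) \<longrightarrow>
               row_prec r j (perm P (f x)) (perm P (g y)))" using prec by blast
    qed
    note msum = this
    have "M_divisible M m n c r P"
      unfolding M_divisible_def
    proof (rule exI[of _ "restr P A"], rule exI[of _ "restr P B"], intro conjI)
      show "0 < len ?S" using RA(2) cA by simp
      show "0 < len ?T" using RB(2) cB by simp
      show "gridded M m n ?S" by (fact RA(1))
      show "gridded M m n ?T" by (fact RB(1))
      show "is_msum m n c r ?S ?T P" by (fact msum)
    qed
    then show False using ind M_indivisible_def by blast
  qed
next
  let ?E = "orient_edges m n c r P"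
  assume sc: "strongly_connected (pts P) ?E"
  show "M_indivisible M m n c r P"
    unfolding M_indivisible_def M_divisible_def
  proof (intro notI, elim exE conjE)
    fix S T assume lS: "0 < len S" and lT: "0 < len T" and ms: "is_msum m n c r S T P"
    obtain f g where H: "f ` pts S \<subseteq> pts P \<and> g ` pts T \<subseteq> pts P \<and>
      f ` pts S \<inter> g ` pts T = {} \<and> f ` pts S \<union> g ` pts T = pts P \<and>
      (\<forall>x\<in>pts S. \<forall>y\<in>pts T.
          (\<forall>i\<in>{1..m}. in_col P i (f x) \<and> in_col P i (g y) \<longrightarrow> col_prec c i (f x) (g y)) \<and>
          (\<forall>j\<in>{1..n}. in_row P j (f x) \<and> in_row P j (g y) \<longrightarrow>
               row_prec r j (perm P (f x)) (perm P (g y))))"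
      using msum_parts[OF ms] by (elim exE)
    have fS: "f ` pts S \<subseteq> pts P" using H by (rule conjunct1)
    have gT: "g ` pts T \<subseteq> pts P" using H[THEN conjunct2] by (rule conjunct1)
    have disj: "f ` pts S \<inter> g ` pts T = {}" using H[THEN conjunct2, THEN conjunct2] by (rule conjunct1)
    have un: "f ` pts S \<union> g ` pts T = pts P"
      using H[THEN conjunct2, THEN conjunct2, THEN conjunct2] by (rule conjunct1)
    note pr = H[THEN conjunct2, THEN conjunct2, THEN conjunct2, THEN conjunct2]
    have prc: "col_prec c i (f x) (g y)" if "x \<in> pts S" "y \<in> pts T" "i \<in> {1..m}"
      "in_col P i (f x)" "in_col P i (g y)" for x y i
      using pr[rule_format, OF that(1,2), THEN conjunct1, rule_format, OF that(3)] that(4,5) by simp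
    have prr: "row_prec r j (perm P (f x)) (perm P (g y))" if "x \<in> pts S" "y \<in> pts T" "j \<in> {1..n}"
      "in_row P j (f x)" "in_row P j (g y)" for x y j
      using pr[rule_format, OF that(1,2), THEN conjunct2, rule_format, OF that(3)] that(4,5) by simp
    have s1: "1 \<in> pts S" and t1: "1 \<in> pts T" using lS lT unfolding pts_def by auto
    let ?F = "f ` pts S"
    have E: "w \<notin> ?F" if e: "(v, w) \<in> ?E" and v: "v \<notin> ?F" for v w
    proof
      assume w: "w \<in> ?F"
      then obtain a where a: "a \<in> pts S" "w = f a" by blast
      have "v \<in> pts P" using edge_pts[OF e] by simp
      then obtain b where b: "b \<in> pts T" "v = g b" using un v by blast
      from e have "(\<exists>i\<in>{1..m}. in_col P i v \<and> in_col P i w \<and> col_prec c i v w) \<or>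
      (\<exists>j\<in>{1..n}. in_row P j v \<and> in_row P j w \<and> row_prec r j (perm P v) (perm P w))"
        unfolding orient_edges_def by simp
      then show False
      proof (elim disjE bexE conjE)
        fix i assume i: "i \<in> {1..m}" "in_col P i v" "in_col P i w" "col_prec c i v w"
        have ic1: "in_col P i (f a)" using i(3) unfolding a(2) .
        have ic2: "in_col P i (g b)" using i(2) unfolding b(2) .
        have "col_prec c i w v" unfolding a(2) b(2) by (rule prc[OF a(1) b(1) i(1) ic1 ic2])
        then show False using i(4) by (rule col_prec_asym)
      next
        fix j assume j: "j \<in> {1..n}" "in_row P j v" "in_row P j w" "row_prec r j (perm P v) (perm P w)"
        have ir1: "in_row P j (f a)" using j(3) unfolding a(2) .
        have ir2: "in_row P j (g b)" using j(2) unfolding b(2) .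
        have "row_prec r j (perm P w) (perm P v)" unfolding a(2) b(2) by (rule prr[OF a(1) b(1) j(1) ir1 ir2])
        then show False using j(4) by (rule row_prec_asym)
      qed
    qed
    have gP: "g 1 \<in> pts P" and fP: "f 1 \<in> pts P" using gT fS s1 t1 by auto
    have R: "(g 1, f 1) \<in> ?E\<^sup>*" using sc gP fP unfolding strongly_connected_def by blast
    have G1: "g 1 \<notin> ?F" using disj t1 by blast
    have "f 1 \<notin> ?F"
    proof (rule closed_reach[of ?E ?F "g 1" "f 1"])
      fix v w assume "(v, w) \<in> ?E" "v \<notin> ?F" then show "w \<notin> ?F" by (rule E)
    next
      show "(g 1, f 1) \<in> ?E\<^sup>*" by (fact R)
    next
      show "g 1 \<notin> ?F" by (fact G1)
    qed
    then show False using s1 by blast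
  qed
qed

end
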